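(* Let $\Delta^{(w)}$ be a dyadic cube of rank $w$, let $\sum_{\mathbf n\in\mathbb N_0^d}a_{\mathbf n}W_{\mathbf n}$ be a $d$-fold Walsh series and $\tau$ the quasimeasure generated by it. If $\tau(\Delta)=0$ for every dyadic cube $\Delta\subset\Delta^{(w)}$, then $S_{2^w\mathbf M}(\mathbf g)=0$ for all $\mathbf g\in\Delta^{(w)}$ and all $\mathbf M\in\mathbb N^d$.
   Context: Fix $d\ge2$. $\mathbb G$ is the dyadic group: sequences $g=(g_k)_{k\ge0}$, $g_k\in\{0,1\}$, coordinatewise addition mod 2, product topology; $\mathbb G^d$ its $d$-th power. For $n\in\mathbb N_0$, $n=\sum_kn_k2^k$, $n_k\in\{0,1\}$. Dyadic interval of rank $k$: $\Delta^{(k)}_m=\{g: g_t=m_{k-1-t},\ 0\le t<k\}$, $0\le m<2^k$; dyadic cube of rank $k$: $\Delta^{(k)}_{\mathbf m}=\prod_l\Delta^{(k)}_{m^l}$. Vector order coordinatewise, $\mathbf 1=(1,\dots,1)$. Walsh functions $W_n(g)=\prod_k(-1)^{g_kn_k}$, $W_{\mathbf n}(\mathbf g)=\prod_lW_{n^l}(g^l)$. Partial sums $S_{\mathbf N}(\mathbf g)=\sum_{\mathbf n<\mathbf N}a_{\mathbf n}W_{\mathbf n}(\mathbf g)$. A quasimeasure is a function $\tau$ on dyadic cubes with $\tau(\Delta^{(k)}_{\mathbf m})=\sum_{\boldsymbol\sigma\in\{0,1\}^d}\tau(\Delta^{(k+1)}_{2\mathbf m+\boldsymbol\sigma})$; the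 quasimeasure generated by the series is $\tau(\Delta^{(k)})=2^{-kd}S_{2^k\mathbf 1}(\mathbf g)$ for $\mathbf g\in\Delta^{(k)}$ ($S_{2^k\mathbf 1}$ is constant on each dyadic cube of rank $k$). *)

theory Defs
  imports Complex_Main "HOL-Library.FuncSet"
begin

text \<open>Dyadic group element: a 0/1 sequence, represented as nat => bool (True = 1).
  A point of G^d is a function on {..<d} (extensional, undefined outside).\<close>

definition walsh :: "nat \<Rightarrow> (nat \<Rightarrow> bool) \<Rightarrow> real" where
  "walsh n g = (\<Prod>k<n. (-1::real) ^ (if g k \<and> bit n k then 1 else 0))"

definition walsh_d :: "nat \<Rightarrow> (nat \<Rightarrow> nat) \<Rightarrow> (nat \<Rightarrow> nat \<Rightarrow> bool) \<Rightarrow> real" where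
  "walsh_d d n g = (\<Prod>l<d. walsh (n l) (g l))"

definition partial_sum ::
  "nat \<Rightarrow> ((nat \<Rightarrow> nat) \<Rightarrow> real) \<Rightarrow> (nat \<Rightarrow> nat) \<Rightarrow> (nat \<Rightarrow> nat \<Rightarrow> bool) \<Rightarrow> real" where
  "partial_sum d a N g = (\<Sum>n\<in>PiE {..<d} (\<lambda>l. {..<N l}). a n * walsh_d d n g)"

definition dyadic_interval :: "nat \<Rightarrow> nat \<Rightarrow> (nat \<Rightarrow> bool) set" where
  "dyadic_interval k m = {g. \<forall>t<k. g t = bit m (k - 1 - t)}"

definition dyadic_cube :: "nat \<Rightarrow> nat \<Rightarrow> (nat \<Rightarrow> nat) \<Rightarrow> (nat \<Rightarrow> nat \<Rightarrow> bool) set" where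
  "dyadic_cube d k m = PiE {..<d} (\<lambda>l. dyadic_interval k (m l))"

definition valid_index :: "nat \<Rightarrow> nat \<Rightarrow> (nat \<Rightarrow> nat) \<Rightarrow> bool" where
  "valid_index d k m \<longleftrightarrow> (\<forall>l<d. m l < 2 ^ k)"

definition gen_quasimeasure ::
  "nat \<Rightarrow> ((nat \<Rightarrow> nat) \<Rightarrow> real) \<Rightarrow> nat \<Rightarrow> (nat \<Rightarrow> nat) \<Rightarrow> real" where
  "gen_quasimeasure d a k m =
     partial_sum d a (\<lambda>l. 2 ^ k) (SOME g. g \<in> dyadic_cube d k m) / 2 ^ (k * d)"

end

theory Submission
  imports Defs
begin


definition eW :: "nat \<Rightarrow> (nat \<Rightarrow> bool) \<Rightarrow> nat \<Rightarrow> real" where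
  "eW n x k = (-1::real) ^ (if x k \<and> bit n k then 1 else 0)"

lemma bit_big: "(n::nat) < 2^K \<Longrightarrow> K \<le> k \<Longrightarrow> \<not> bit n k"
  by (metis bit_take_bit_iff linorder_not_less take_bit_nat_eq_self)

lemma walsh_rep:
  assumes "\<forall>k\<ge>K. \<not> bit n k"
  shows "walsh n x = (\<Prod>k<K. eW n x k)"
proof -
  have nb: "\<forall>k\<ge>n. \<not> bit n k" using bit_big[of n n] less_exp by blast
  have "walsh n x = (\<Prod>k<max n K. eW n x k)"
    unfolding walsh_def eW_def by (rule prod.mono_neutral_left) (use nb in auto)
  also have "\<dots> = (\<Prod>k<K. eW n x k)"
    unfolding eW_def by (rule prod.mono_neutral_right) (use assms in auto)
  finally show ?thesis .
qed

lemma walsh_rep2: "n < 2^K \<Longrightarrow> walsh n x = (\<Prod>k<K. eW n x k)"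
  using walsh_rep bit_big by blast

lemma walsh_eq: "n < 2^K \<Longrightarrow> \<forall>k<K. x k = y k \<Longrightarrow> walsh n x = walsh n y"
  by (simp add: walsh_rep2 eW_def)

definition Bv :: "nat \<Rightarrow> (nat \<Rightarrow> bool) set" where
  "Bv K = {x. \<forall>t\<ge>K. \<not> x t}"

lemma Bv_0: "Bv 0 = {\<lambda>_. False}"
  unfolding Bv_def by auto

lemma Bv_Suc: "Bv (Suc K) = Bv K \<union> (\<lambda>x. x(K:=True)) ` Bv K"
proof
  show "Bv (Suc K) \<subseteq> Bv K \<union> (\<lambda>x. x(K:=True)) ` Bv K"
  proof
    fix x assume x: "x \<in> Bv (Suc K)"
    show "x \<in> Bv K \<union> (\<lambda>x. x(K:=True)) ` Bv K"
    proof (cases "x K")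
      case True
      have "x = (x(K:=False))(K:=True)" using True by (simp add: fun_eq_iff)
      moreover have "x(K:=False) \<in> Bv K" using x unfolding Bv_def by auto
      ultimately show ?thesis by blast
    next
      case False
      have "\<forall>t\<ge>K. \<not> x t"
      proof (intro allI impI)
        fix t assume "K \<le> t"
        then show "\<not> x t" using x False unfolding Bv_def by (cases "t = K") auto
      qed
      then have "x \<in> Bv K" unfolding Bv_def by simp
      then show ?thesis by blast
    qed
  qed
next
  show "Bv K \<union> (\<lambda>x. x(K:=True)) ` Bv K \<subseteq> Bv (Suc K)"
    unfolding Bv_def by auto
qed

lemma finite_Bv: "finite (Bv K)"
  by (induction K) (auto simp: Bv_0 Bv_Suc)

lemma ortho_gen:
  "(\<Sum>x\<in>Bv K. \<Prod>k<K. eW n x k * eW n' x k) = (\<Prod>k<K. if bit n k = bit n' k then 2 else 0)"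
proof (induction K)
  case 0 then show ?case by (simp add: Bv_0)
next
  case (Suc K)
  let ?f = "\<lambda>K x. \<Prod>k<K. eW n x k * eW n' x k"
  define c where "c = (-1::real) ^ (if bit n K then 1 else 0) * (-1::real) ^ (if bit n' K then 1 else 0)"
  have disj: "Bv K \<inter> (\<lambda>x. x(K:=True)) ` Bv K = {}" unfolding Bv_def by auto
  have inj: "inj_on (\<lambda>x. x(K:=True)) (Bv K)"
  proof (rule inj_onI)
    fix x y assume "x \<in> Bv K" "y \<in> Bv K" "x(K:=True) = y(K:=True)"
    then show "x = y"
    proof -
      assume a: "x \<in> Bv K" "y \<in> Bv K" "x(K:=True) = y(K:=True)"
      show "x = y"
      proof
        fix t show "x t = y t"
        proof (cases "t = K")
          case True then show ?thesis using a(1,2) unfolding Bv_def by auto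
        next
          case False then show ?thesis using fun_cong[OF a(3), of t] by simp
        qed
      qed
    qed
  qed
  have A: "?f (Suc K) x = ?f K x" if "x \<in> Bv K" for x
    using that by (simp add: Bv_def eW_def)
  have B: "?f (Suc K) (x(K:=True)) = ?f K x * c" for x
  proof -
    have "?f K (x(K:=True)) = ?f K x" by (intro prod.cong) (auto simp: eW_def)
    then show ?thesis by (simp add: eW_def c_def)
  qed
  have "(\<Sum>x\<in>Bv (Suc K). ?f (Suc K) x) = (\<Sum>x\<in>Bv K. ?f (Suc K) x) + (\<Sum>x\<in>(\<lambda>x. x(K:=True)) ` Bv K. ?f (Suc K) x)"
    unfolding Bv_Suc by (rule sum.union_disjoint) (use finite_Bv disj in auto)
  also have "(\<Sum>x\<in>(\<lambda>x. x(K:=True)) ` Bv K. ?f (Suc K) x) = (\<Sum>x\<in>Bv K. ?f K x * c)"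
    by (simp only: sum.reindex[OF inj] comp_def B)
  also have "(\<Sum>x\<in>Bv K. ?f (Suc K) x) = (\<Sum>x\<in>Bv K. ?f K x)"
    by (rule sum.cong[OF refl A])
  also have "(\<Sum>x\<in>Bv K. ?f K x) + (\<Sum>x\<in>Bv K. ?f K x * c) = (\<Sum>x\<in>Bv K. ?f K x) * (1 + c)"
    by (simp add: sum_distrib_right sum_distrib_left[symmetric] distrib_left)
  also have "1 + c = (if bit n K = bit n' K then 2 else 0)" unfolding c_def by auto
  finally show ?case using Suc.IH by simp
qed

lemma ortho1:
  assumes "n < 2^K" "n' < 2^K"
  shows "(\<Sum>x\<in>Bv K. walsh n x * walsh n' x) = (if n = n' then 2^K else 0)"
proof -
  have "(\<Sum>x\<in>Bv K. walsh n x * walsh n' x) = (\<Sum>x\<in>Bv K. \<Prod>k<K. eW n x k * eW n' x k)"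
    using assms by (simp add: walsh_rep2 prod.distrib)
  also have "\<dots> = (\<Prod>k<K. if bit n k = bit n' k then 2 else 0)" by (rule ortho_gen)
  also have "\<dots> = (if n = n' then 2^K else 0)"
  proof (cases "n = n'")
    case True then show ?thesis by simp
  next
    case False
    then obtain k where k: "bit n k \<noteq> bit n' k" using bit_eq_iff by blast
    have kK: "k < K"
    proof (rule ccontr)
      assume "\<not> k < K"
      then have "\<not> bit n k" "\<not> bit n' k" using bit_big[OF assms(1), of k] bit_big[OF assms(2), of k] by simp_all
      with k show False by simp
    qed
    have "(\<Prod>k<K. if bit n k = bit n' k then 2 else 0) = (0::real)"
      by (rule prod_zero) (use k kK in auto)
    then show ?thesis using False by simp
  qed
  finally show ?thesis .
qed

lemma walsh_flip: "walsh (xor n (2^t)) x = walsh n x * (if x t then -1 else 1)"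
proof -
  define K where "K = n + t + 1"
  have b1: "\<forall>k\<ge>K. \<not> bit n k" using bit_big[of n n] less_exp unfolding K_def by (meson add_leE le_trans)
  have bx: "bit (xor (n::nat) (2^t)) k = (bit n k \<noteq> (k = t))" for k by (auto simp: bit_xor_iff bit_exp_iff)
  have b2: "\<forall>k\<ge>K. \<not> bit (xor n (2^t)) k" using b1 bx unfolding K_def by auto
  have "walsh (xor n (2^t)) x = (\<Prod>k<K. eW (xor n (2^t)) x k)" by (rule walsh_rep[OF b2])
  also have "\<dots> = (\<Prod>k<K. eW n x k * (if k = t then (if x t then -1 else 1) else 1))"
    by (rule prod.cong) (auto simp: eW_def bx)
  also have "\<dots> = (\<Prod>k<K. eW n x k) * (if x t then -1 else 1)"
    by (simp add: prod.distrib K_def)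
  also have "(\<Prod>k<K. eW n x k) = walsh n x" by (rule walsh_rep[OF b1, symmetric])
  finally show ?thesis .
qed

lemma drop_xor: "t < w \<Longrightarrow> drop_bit w (xor (n::nat) (2^t)) = drop_bit w n"
  by (rule bit_eqI) (auto simp: bit_drop_bit_eq bit_xor_iff bit_exp_iff)

lemma xor_bound: "(n::nat) < 2^w * M \<Longrightarrow> t < w \<Longrightarrow> xor n (2^t) < 2^w * M"
  using drop_xor[of t w n] 
  by (metis drop_bit_eq_div less_mult_imp_div_less mult.commute div_less_iff_less_mult zero_less_numeral zero_less_power)

lemma kernel1:
  assumes "t < w" "x t \<noteq> y t"
  shows "(\<Sum>n<2^w*M. walsh n x * walsh n y) = 0"
proof -
  let ?s = "\<lambda>n::nat. xor n (2^t)"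
  let ?A = "{..<2^w*M::nat}"
  let ?f = "\<lambda>n. walsh n x * walsh n y"
  have inv: "?s (?s n) = n" for n by (simp add: xor.assoc)
  have bij: "bij_betw ?s ?A ?A"
    by (rule bij_betw_byWitness[where f'="?s"]) (auto simp: inv xor_bound assms(1))
  have neg: "?f (?s n) = - ?f n" for n
    using assms(2) by (cases "x t") (auto simp: walsh_flip)
  have "sum ?f ?A = sum (\<lambda>n. ?f (?s n)) ?A" by (rule sum.reindex_bij_betw[OF bij, symmetric])
  also have "\<dots> = - sum ?f ?A" by (simp add: neg sum_negf)
  finally show ?thesis by simp
qed

lemma exists_index: "\<exists>m<(2::nat)^K. \<forall>t<K. x t = bit m (K-1-t)"
proof (induction K)
  case 0 then show ?case by auto
next
  case (Suc K)
  then obtain m where m: "m < (2::nat)^K" "\<forall>t<K. x t = bit m (K-1-t)" by blast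
  define m' where "m' = 2*m + (if x K then 1 else 0)"
  have "m' < 2^Suc K" unfolding m'_def using m(1) by auto
  moreover have "\<forall>t<Suc K. x t = bit m' (Suc K-1-t)"
  proof (intro allI impI)
    fix t assume t: "t < Suc K"
    show "x t = bit m' (Suc K-1-t)"
    proof (cases "t = K")
      case True then show ?thesis unfolding m'_def by (simp add: bit_0)
    next
      case False
      then have "Suc K - 1 - t = Suc (K-1-t)" using t by auto
      then show ?thesis using m(2) t False unfolding m'_def by (simp add: bit_Suc)
    qed
  qed
  ultimately show ?case by blast
qed



definition Pv :: "nat \<Rightarrow> nat \<Rightarrow> (nat \<Rightarrow> nat \<Rightarrow> bool) set" where
  "Pv d K = PiE {..<d} (\<lambda>_. Bv K)"

lemma orthod:
  assumes "n \<in> PiE {..<d} (\<lambda>_. {..<(2::nat)^K})" "n' \<in> PiE {..<d} (\<lambda>_. {..<(2::nat)^K})"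
  shows "(\<Sum>h\<in>Pv d K. walsh_d d n h * walsh_d d n' h) = (if n = n' then 2^(K*d) else 0)"
proof -
  have "(\<Sum>h\<in>Pv d K. walsh_d d n h * walsh_d d n' h)
      = (\<Sum>h\<in>Pv d K. \<Prod>l<d. walsh (n l) (h l) * walsh (n' l) (h l))"
    unfolding walsh_d_def by (simp add: prod.distrib)
  also have "\<dots> = (\<Prod>l<d. \<Sum>x\<in>Bv K. walsh (n l) x * walsh (n' l) x)"
    unfolding Pv_def
    by (rule prod_sum_PiE[of "{..<d}" "\<lambda>_. Bv K" "\<lambda>l x. walsh (n l) x * walsh (n' l) x", symmetric])
       (auto simp: finite_Bv)
  also have "\<dots> = (\<Prod>l<d. if n l = n' l then 2^K else 0)"
    by (rule prod.cong[OF refl]) (use assms in \<open>auto simp: ortho1 PiE_iff\<close>)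
  also have "\<dots> = (if n = n' then 2^(K*d) else 0)"
  proof (cases "n = n'")
    case True then show ?thesis by (simp add: power_mult)
  next
    case False
    then obtain l where l: "n l \<noteq> n' l" by auto
    have "l < d"
    proof (rule ccontr)
      assume "\<not> l < d"
      then have "n l = undefined" "n' l = undefined" using assms by (auto intro: PiE_arb)
      with l show False by simp
    qed
    then have "(\<Prod>l<d. if n l = n' l then 2^K else 0) = (0::real)"
      using l by (intro prod_zero) auto
    then show ?thesis using False by simp
  qed
  finally show ?thesis .
qed

lemma cube_of:
  assumes "h \<in> Pv d K"
  obtains m where "valid_index d K m" "h \<in> dyadic_cube d K m"
proof -
  define m :: "nat \<Rightarrow> nat" where "m l = (SOME m. m < 2^K \<and> (\<forall>t<K. h l t = bit m (K-1-t)))" for l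
  have mm: "m l < 2^K \<and> (\<forall>t<K. h l t = bit (m l) (K-1-t))" for l
    unfolding m_def by (rule someI_ex) (rule exists_index)
  have "valid_index d K m" using mm unfolding valid_index_def by simp
  moreover have "h \<in> dyadic_cube d K m"
    unfolding dyadic_cube_def
  proof (rule PiE_I)
    fix l assume "l \<in> {..<d}"
    show "h l \<in> dyadic_interval K (m l)" unfolding dyadic_interval_def using mm[of l] by simp
  next
    fix l assume "l \<notin> {..<d}"
    then show "h l = undefined" using assms unfolding Pv_def by (rule PiE_arb[rotated])
  qed
  ultimately show thesis using that by blast
qed

lemma const_on_cube:
  assumes "g \<in> dyadic_cube d K m" "h \<in> dyadic_cube d K m"
  shows "partial_sum d a (\<lambda>l. 2^K) g = partial_sum d a (\<lambda>l. 2^K) h"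
  unfolding partial_sum_def
proof (rule sum.cong[OF refl])
  fix n assume n: "n \<in> PiE {..<d} (\<lambda>l. {..<(2::nat)^K})"
  have "walsh_d d n g = walsh_d d n h" unfolding walsh_d_def
  proof (rule prod.cong[OF refl])
    fix l assume l: "l \<in> {..<d}"
    have "n l < 2^K" using n l by auto
    moreover have "\<forall>k<K. g l k = h l k"
      using assms l unfolding dyadic_cube_def dyadic_interval_def PiE_iff by auto
    ultimately show "walsh (n l) (g l) = walsh (n l) (h l)" by (rule walsh_eq)
  qed
  then show "a n * walsh_d d n g = a n * walsh_d d n h" by simp
qed

theorem proposition3:
  fixes d w :: nat and m0 :: "nat \<Rightarrow> nat" and a :: "(nat \<Rightarrow> nat) \<Rightarrow> real"
  assumes "d \<ge> 2"
    and "valid_index d w m0"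
    and "\<And>k m. valid_index d k m \<Longrightarrow> dyadic_cube d k m \<subseteq> dyadic_cube d w m0 \<Longrightarrow>
            gen_quasimeasure d a k m = 0"
  shows "\<forall>g \<in> dyadic_cube d w m0. \<forall>M. (\<forall>l<d. M l \<ge> 1) \<longrightarrow>
            partial_sum d a (\<lambda>l. 2 ^ w * M l) g = 0"
proof (intro ballI allI impI)
  fix g and M :: "nat \<Rightarrow> nat" assume g: "g \<in> dyadic_cube d w m0" and M: "\<forall>l<d. 1 \<le> M l"
  define S where "S = (\<Sum>l<d. M l)"
  define K where "K = w + S"
  have wK: "w \<le> K" unfolding K_def by simp
  have NK: "2^w * M l \<le> 2^K" if "l < d" for l
  proof -
    have "M l \<le> S" unfolding S_def using that by (intro member_le_sum) auto
    also have "S < 2^S" by (rule less_exp)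
    finally have "M l \<le> 2^S" by simp
    then show ?thesis unfolding K_def by (simp add: power_add)
  qed
  define I where "I = PiE {..<d} (\<lambda>l. {..<(2::nat)^K})"
  define IN where "IN = PiE {..<d} (\<lambda>l. {..<(2::nat)^w * M l})"
  define P where "P = Pv d K"
  define SK where "SK = partial_sum d a (\<lambda>l. 2^K)"
  have finP: "finite P" unfolding P_def Pv_def by (auto intro: finite_PiE simp: finite_Bv)
  have finI: "finite I" unfolding I_def by (auto intro: finite_PiE)
  have finIN: "finite IN" unfolding IN_def by (auto intro: finite_PiE)
  have INI: "IN \<subseteq> I" unfolding IN_def I_def using NK by (force simp: PiE_iff)
  have inv: "a n = (\<Sum>h\<in>P. walsh_d d n h * SK h) / 2^(K*d)" if n: "n \<in> I" for n
  proof -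
    have "(\<Sum>h\<in>P. walsh_d d n h * SK h) = (\<Sum>h\<in>P. \<Sum>n'\<in>I. a n' * (walsh_d d n h * walsh_d d n' h))"
      unfolding SK_def partial_sum_def I_def by (simp add: sum_distrib_left mult_ac)
    also have "\<dots> = (\<Sum>n'\<in>I. a n' * (\<Sum>h\<in>P. walsh_d d n h * walsh_d d n' h))"
      by (subst sum.swap) (simp add: sum_distrib_left)
    also have "\<dots> = (\<Sum>n'\<in>I. if n = n' then a n' * 2^(K*d) else 0)"
      by (rule sum.cong[OF refl]) (use n in \<open>simp add: P_def I_def orthod\<close>)
    also have "\<dots> = a n * 2^(K*d)" using n finI by (simp add: sum.delta)
    finally show ?thesis by simp
  qed
  have zero: "SK h * (\<Sum>n\<in>IN. walsh_d d n h * walsh_d d n g) = 0" if h: "h \<in> P" for h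
  proof (cases "\<forall>l<d. \<forall>t<w. h l t = g l t")
    case True
    obtain m where m: "valid_index d K m" "h \<in> dyadic_cube d K m" using cube_of h P_def by blast
    have sub: "dyadic_cube d K m \<subseteq> dyadic_cube d w m0"
    proof
      fix y assume y: "y \<in> dyadic_cube d K m"
      show "y \<in> dyadic_cube d w m0"
        using y m(2) g True wK unfolding dyadic_cube_def dyadic_interval_def PiE_iff by auto
    qed
    have "gen_quasimeasure d a K m = 0" by (rule assms(3)[OF m(1) sub])
    then have "partial_sum d a (\<lambda>l. 2^K) (SOME g. g \<in> dyadic_cube d K m) = 0"
      unfolding gen_quasimeasure_def by simp
    moreover have "(SOME g. g \<in> dyadic_cube d K m) \<in> dyadic_cube d K m" using m(2) by (rule someI[of "\<lambda>g. g \<in> dyadic_cube d K m" h])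
    ultimately have "SK h = 0" unfolding SK_def using const_on_cube m(2) by metis
    then show ?thesis by simp
  next
    case False
    then obtain l t where lt: "l < d" "t < w" "h l t \<noteq> g l t" by blast
    have "(\<Sum>n\<in>IN. walsh_d d n h * walsh_d d n g) = (\<Sum>n\<in>IN. \<Prod>l<d. walsh (n l) (h l) * walsh (n l) (g l))"
      unfolding walsh_d_def by (simp add: prod.distrib)
    also have "\<dots> = (\<Prod>l<d. \<Sum>j<2^w * M l. walsh j (h l) * walsh j (g l))"
      unfolding IN_def
      by (rule prod_sum_PiE[of "{..<d}" "\<lambda>l. {..<2^w * M l}" "\<lambda>l j. walsh j (h l) * walsh j (g l)", symmetric]) auto
    also have "\<dots> = 0"
      by (rule prod_zero) (use lt kernel1[of t w "h l" "g l", OF lt(2) lt(3)] in auto)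
    finally show ?thesis by simp
  qed
  have "partial_sum d a (\<lambda>l. 2^w * M l) g = (\<Sum>n\<in>IN. a n * walsh_d d n g)"
    unfolding partial_sum_def IN_def by simp
  also have "\<dots> = (\<Sum>n\<in>IN. (\<Sum>h\<in>P. walsh_d d n h * SK h) / 2^(K*d) * walsh_d d n g)"
    by (rule sum.cong[OF refl]) (use INI inv in auto)
  also have "\<dots> = (\<Sum>n\<in>IN. \<Sum>h\<in>P. walsh_d d n h * SK h * walsh_d d n g / 2^(K*d))"
    by (simp add: sum_divide_distrib sum_distrib_right)
  also have "\<dots> = (\<Sum>h\<in>P. \<Sum>n\<in>IN. walsh_d d n h * SK h * walsh_d d n g / 2^(K*d))"
    by (rule sum.swap)
  also have "\<dots> = (\<Sum>h\<in>P. SK h * (\<Sum>n\<in>IN. walsh_d d n h * walsh_d d n g) / 2^(K*d))"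
    by (simp add: sum_distrib_left sum_divide_distrib mult_ac)
  also have "\<dots> = 0" by (rule sum.neutral) (use zero in simp)
  finally show "partial_sum d a (\<lambda>l. 2^w * M l) g = 0" .
qed
end
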